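(* The first $\varepsilon\tau$-theorem holds in $\varepsilon\tau(\mathbf{LC})$ for $\varepsilon\tau$-free formulas: if $D$ is a quantifier-free formula containing no $\varepsilon\tau$-terms and $\vdash_{\varepsilon\tau(\mathbf{LC})}D$, then $\vdash_{\mathbf{LC}}D$.
   Context: $\mathbf{LC}$ is the intermediate propositional logic axiomatized over intuitionistic propositional logic by $\mathit{Lin}$: $(A\to B)\lor(B\to A)$ (infinite-valued Gödel logic). $\varepsilon\tau$-terms: $\varepsilon x\,A(x)$, $\tau x\,A(x)$ for formulas $A(x)$. Critical formulas: $A(t)\to A(\varepsilon x\,A(x))$ and $A(\tau x\,A(x))\to A(t)$. $\vdash_{\varepsilon\tau(\mathbf{L})}B$: $B$ derivable in the quantifier-free first-order language with $\varepsilon\tau$-terms from critical formulas using substitution instances of theorems of $\mathbf{L}$ and modus ponens; $\vdash_{\mathbf{L}}$ is the same without critical formulas. *)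

theory Defs
  imports Main
begin

datatype pform =
    PVar nat
  | PBot
  | PAnd pform pform
  | POr pform pform
  | PImp pform pform

inductive LC_thm :: "pform \<Rightarrow> bool" where
  ax_K:    "LC_thm (PImp A (PImp B A))"
| ax_S:    "LC_thm (PImp (PImp A (PImp B C)) (PImp (PImp A B) (PImp A C)))"
| ax_and1: "LC_thm (PImp (PAnd A B) A)"
| ax_and2: "LC_thm (PImp (PAnd A B) B)"
| ax_andI: "LC_thm (PImp A (PImp B (PAnd A B)))"
| ax_or1:  "LC_thm (PImp A (POr A B))"
| ax_or2:  "LC_thm (PImp B (POr A B))"
| ax_orE:  "LC_thm (PImp (PImp A C) (PImp (PImp B C) (PImp (POr A B) C)))"
| ax_efq:  "LC_thm (PImp PBot A)"
| ax_lin:  "LC_thm (POr (PImp A B) (PImp B A))"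
| mp:      "LC_thm (PImp A B) \<Longrightarrow> LC_thm A \<Longrightarrow> LC_thm B"

text \<open>Locally nameless representation: free variables are named (Free),
  the variable bound by an epsilon/tau operator is a de Bruijn index (Bnd).
  Eps A represents epsilon x A(x), where A(x) is A with Bnd 0 (at top level)
  standing for x.\<close>

datatype ('f, 'p) trm =
    Free nat
  | Bnd nat
  | Fn 'f "('f, 'p) trm list"
  | Eps "('f, 'p) fm"
  | Tau "('f, 'p) fm"
and ('f, 'p) fm =
    Atom 'p "('f, 'p) trm list"
  | Bot
  | And "('f, 'p) fm" "('f, 'p) fm"
  | Or "('f, 'p) fm" "('f, 'p) fm"
  | Imp "('f, 'p) fm" "('f, 'p) fm"

text \<open>Opening: replace the bound index k by the term t (capture-free
  substitution A(t) for the bound variable).\<close>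

primrec opent :: "nat \<Rightarrow> ('f, 'p) trm \<Rightarrow> ('f, 'p) trm \<Rightarrow> ('f, 'p) trm"
and openf :: "nat \<Rightarrow> ('f, 'p) trm \<Rightarrow> ('f, 'p) fm \<Rightarrow> ('f, 'p) fm" where
  "opent k t (Free x) = Free x"
| "opent k t (Bnd n) = (if n = k then t else Bnd n)"
| "opent k t (Fn f ts) = Fn f (map (opent k t) ts)"
| "opent k t (Eps A) = Eps (openf (Suc k) t A)"
| "opent k t (Tau A) = Tau (openf (Suc k) t A)"
| "openf k t (Atom P ts) = Atom P (map (opent k t) ts)"
| "openf k t Bot = Bot"
| "openf k t (And A B) = And (openf k t A) (openf k t B)"
| "openf k t (Or A B) = Or (openf k t A) (openf k t B)"
| "openf k t (Imp A B) = Imp (openf k t A) (openf k t B)"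

text \<open>Local closedness: all de Bruijn indices are bound (below depth k).
  Well-formed terms/formulas are those with lct 0 / lcf 0.\<close>

primrec lct :: "nat \<Rightarrow> ('f, 'p) trm \<Rightarrow> bool"
and lcf :: "nat \<Rightarrow> ('f, 'p) fm \<Rightarrow> bool" where
  "lct k (Free x) = True"
| "lct k (Bnd n) = (n < k)"
| "lct k (Fn f ts) = list_all (lct k) ts"
| "lct k (Eps A) = lcf (Suc k) A"
| "lct k (Tau A) = lcf (Suc k) A"
| "lcf k (Atom P ts) = list_all (lct k) ts"
| "lcf k Bot = True"
| "lcf k (And A B) = (lcf k A \<and> lcf k B)"
| "lcf k (Or A B) = (lcf k A \<and> lcf k B)"
| "lcf k (Imp A B) = (lcf k A \<and> lcf k B)"

primrec et_free_t :: "('f, 'p) trm \<Rightarrow> bool"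
and et_free :: "('f, 'p) fm \<Rightarrow> bool" where
  "et_free_t (Free x) = True"
| "et_free_t (Bnd n) = True"
| "et_free_t (Fn f ts) = list_all et_free_t ts"
| "et_free_t (Eps A) = False"
| "et_free_t (Tau A) = False"
| "et_free (Atom P ts) = list_all et_free_t ts"
| "et_free Bot = True"
| "et_free (And A B) = (et_free A \<and> et_free B)"
| "et_free (Or A B) = (et_free A \<and> et_free B)"
| "et_free (Imp A B) = (et_free A \<and> et_free B)"

primrec psubst :: "(nat \<Rightarrow> ('f, 'p) fm) \<Rightarrow> pform \<Rightarrow> ('f, 'p) fm" where
  "psubst \<sigma> (PVar i) = \<sigma> i"
| "psubst \<sigma> PBot = Bot"
| "psubst \<sigma> (PAnd A B) = And (psubst \<sigma> A) (psubst \<sigma> B)"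
| "psubst \<sigma> (POr A B) = Or (psubst \<sigma> A) (psubst \<sigma> B)"
| "psubst \<sigma> (PImp A B) = Imp (psubst \<sigma> A) (psubst \<sigma> B)"

inductive critical :: "('f, 'p) fm \<Rightarrow> bool" where
  crit_eps: "lcf 1 A \<Longrightarrow> lct 0 t \<Longrightarrow> critical (Imp (openf 0 t A) (openf 0 (Eps A) A))"
| crit_tau: "lcf 1 A \<Longrightarrow> lct 0 t \<Longrightarrow> critical (Imp (openf 0 (Tau A) A) (openf 0 t A))"

inductive deriv_et_LC :: "('f, 'p) fm \<Rightarrow> bool" where
  et_inst: "LC_thm \<phi> \<Longrightarrow> (\<And>i. lcf 0 (\<sigma> i)) \<Longrightarrow> deriv_et_LC (psubst \<sigma> \<phi>)"
| et_crit: "critical A \<Longrightarrow> deriv_et_LC A"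
| et_mp:   "deriv_et_LC (Imp A B) \<Longrightarrow> deriv_et_LC A \<Longrightarrow> deriv_et_LC B"

inductive deriv_LC :: "('f, 'p) fm \<Rightarrow> bool" where
  L_inst: "LC_thm \<phi> \<Longrightarrow> (\<And>i. lcf 0 (\<sigma> i)) \<Longrightarrow> deriv_LC (psubst \<sigma> \<phi>)"
| L_mp:   "deriv_LC (Imp A B) \<Longrightarrow> deriv_LC A \<Longrightarrow> deriv_LC B"

end

theory Submission imports Defs begin

definition gimp :: "nat \<Rightarrow> nat \<Rightarrow> nat \<Rightarrow> nat" where
  "gimp K a b = (if a \<le> b then K else b)"

primrec peval :: "nat \<Rightarrow> (nat \<Rightarrow> nat) \<Rightarrow> pform \<Rightarrow> nat" where
  "peval K w (PVar i) = w i"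
| "peval K w PBot = 0"
| "peval K w (PAnd A B) = min (peval K w A) (peval K w B)"
| "peval K w (POr A B) = max (peval K w A) (peval K w B)"
| "peval K w (PImp A B) = gimp K (peval K w A) (peval K w B)"

lemma peval_le: "(\<forall>i. w i \<le> K) \<Longrightarrow> peval K w A \<le> K"
  by (induction A) (auto simp: gimp_def)

lemma LC_sound:
  assumes "LC_thm \<phi>" "\<forall>i. w i \<le> K"
  shows "peval K w \<phi> = K"
proof -
  have bnd: "\<And>A. peval K w A \<le> K" using peval_le assms(2) by blast
  show ?thesis using assms(1)
  proof (induction rule: LC_thm.induct)
    case (mp A B)
    then show ?case using bnd[of B] by (auto simp: gimp_def split: if_splits)
  qed (use bnd in \<open>auto simp: gimp_def\<close>)
qed

inductive pder :: "pform set \<Rightarrow> pform \<Rightarrow> bool" where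
  phyp: "A \<in> T \<Longrightarrow> pder T A"
| pthm: "LC_thm A \<Longrightarrow> pder T A"
| pmp: "pder T (PImp A B) \<Longrightarrow> pder T A \<Longrightarrow> pder T B"

lemma pder_empty: "pder T A \<Longrightarrow> T = {} \<Longrightarrow> LC_thm A"
  by (induction rule: pder.induct) (auto intro: LC_thm.mp)

lemma pder_mono: "pder T A \<Longrightarrow> T \<subseteq> T' \<Longrightarrow> pder T' A"
  by (induction rule: pder.induct) (auto intro: pder.intros)

lemma LC_id: "LC_thm (PImp A A)"
  by (meson LC_thm.ax_K LC_thm.ax_S LC_thm.mp)

lemma deduction_gen: "pder S B \<Longrightarrow> S = insert A T \<Longrightarrow> pder T (PImp A B)"
proof (induction rule: pder.induct)
  case (phyp B S)
  then show ?case
    by (metis LC_id insert_iff pder.phyp pder.pmp pder.pthm LC_thm.ax_K)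
next
  case (pthm B S)
  then show ?case by (meson LC_thm.ax_K LC_thm.mp pder.pthm)
next
  case (pmp S B C)
  then show ?case by (meson LC_thm.ax_S pder.pmp pder.pthm)
qed

lemma deduction: "pder (insert A T) B \<Longrightarrow> pder T (PImp A B)"
  using deduction_gen by blast

lemma compact: "pder T A \<Longrightarrow> \<exists>F. finite F \<and> F \<subseteq> T \<and> pder F A"
proof (induction rule: pder.induct)
  case (phyp A T)
  then show ?case by (intro exI[of _ "{A}"]) (auto intro: pder.phyp)
next
  case (pthm A T)
  then show ?case by (intro exI[of _ "{}"]) (auto intro: pder.pthm)
next
  case (pmp T A B)
  then obtain F1 F2 where "finite F1" "F1 \<subseteq> T" "pder F1 (PImp A B)"
    "finite F2" "F2 \<subseteq> T" "pder F2 A" by blast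
  then show ?case
    by (intro exI[of _ "F1 \<union> F2"]) (auto intro: pder.pmp pder_mono)
qed

lemma maximal_theory:
  assumes "\<not> pder {} D"
  shows "\<exists>M. \<not> pder M D \<and> (\<forall>X. \<not> pder X D \<longrightarrow> M \<subseteq> X \<longrightarrow> X = M)"
proof -
  let ?P = "{T. \<not> pder T D}"
  have "\<forall>C\<in>chains ?P. \<Union>C \<in> ?P"
  proof
    fix C assume C: "C \<in> chains ?P"
    show "\<Union>C \<in> ?P"
    proof (cases "C = {}")
      case True then show ?thesis using assms by simp
    next
      case False
      show ?thesis
      proof (rule ccontr)
        assume "\<Union>C \<notin> ?P"
        then have "pder (\<Union>C) D" by simp
        then obtain F where F: "finite F" "F \<subseteq> \<Union>C" "pder F D" using compact by blast
        have "subset.chain ?P C" using C by (simp add: chains_alt_def)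
        then obtain X where "X \<in> C" "F \<subseteq> X"
          using finite_subset_Union_chain[OF F(1) F(2) False] by metis
        then have "pder X D" using F(3) pder_mono by blast
        moreover have "X \<in> ?P" using \<open>X \<in> C\<close> C by (auto simp: chains_def)
        ultimately show False by simp
      qed
    qed
  qed
  from Zorn_Lemma[OF this] show ?thesis by blast
qed

definition PTop :: pform where "PTop = PImp PBot PBot"

primrec sub :: "pform \<Rightarrow> pform set" where
  "sub (PVar i) = {PVar i}"
| "sub PBot = {PBot}"
| "sub (PAnd A B) = insert (PAnd A B) (sub A \<union> sub B)"
| "sub (POr A B) = insert (POr A B) (sub A \<union> sub B)"
| "sub (PImp A B) = insert (PImp A B) (sub A \<union> sub B)"

lemma finite_sub: "finite (sub A)" by (induction A) auto
lemma sub_self: "A \<in> sub A" by (induction A) auto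

locale primeth =
  fixes T :: "pform set" and D :: pform
  assumes notD: "\<not> pder T D"
    and maxT: "\<And>X. \<not> pder X D \<Longrightarrow> T \<subseteq> X \<Longrightarrow> X = T"
begin

lemma closed: "pder T A \<Longrightarrow> A \<in> T"
proof (rule ccontr)
  assume a: "pder T A" "A \<notin> T"
  have "\<not> pder (insert A T) D"
  proof
    assume "pder (insert A T) D"
    then have "pder T (PImp A D)" by (rule deduction)
    then have "pder T D" using a(1) by (rule pder.pmp)
    then show False using notD by simp
  qed
  then have "insert A T = T" using maxT by blast
  then show False using a by blast
qed

lemma thm_in: "LC_thm A \<Longrightarrow> A \<in> T" by (intro closed pder.pthm)
lemma mp_in: "PImp A B \<in> T \<Longrightarrow> A \<in> T \<Longrightarrow> B \<in> T"
  by (intro closed) (meson pder.phyp pder.pmp)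

lemma notin_imp: "A \<notin> T \<Longrightarrow> pder T (PImp A D)"
proof -
  assume "A \<notin> T"
  then have "insert A T \<noteq> T" by blast
  then have "pder (insert A T) D" using maxT by blast
  then show ?thesis by (rule deduction)
qed

lemma D_notin: "D \<notin> T" using notD pder.phyp by blast

lemma prime: "POr A B \<in> T \<Longrightarrow> A \<in> T \<or> B \<in> T"
proof (rule ccontr)
  assume a: "POr A B \<in> T" "\<not> (A \<in> T \<or> B \<in> T)"
  then have "pder T (PImp A D)" "pder T (PImp B D)" using notin_imp by auto
  then have "pder T (PImp (POr A B) D)"
    by (meson LC_thm.ax_orE pder.pmp pder.pthm)
  then have "pder T D" using a(1) by (meson pder.phyp pder.pmp)
  then show False using notD by simp
qed

definition le :: "pform \<Rightarrow> pform \<Rightarrow> bool" where "le A B \<longleftrightarrow> PImp A B \<in> T"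

lemma le_total: "le A B \<or> le B A"
  unfolding le_def using prime thm_in[OF LC_thm.ax_lin] by blast

lemma le_refl: "le A A" unfolding le_def using thm_in LC_id by blast

lemma le_trans: "le A B \<Longrightarrow> le B C \<Longrightarrow> le A C"
proof -
  assume "le A B" "le B C"
  then have "pder (insert A T) C" unfolding le_def
    by (meson insertI1 pder.phyp pder.pmp subset_insertI pder_mono)
  then show "le A C" unfolding le_def using deduction closed by blast
qed

lemma le_bot: "le PBot A" unfolding le_def using thm_in LC_thm.ax_efq by blast

lemma top_in: "PTop \<in> T" unfolding PTop_def using thm_in LC_id by blast

lemma le_top: "le A PTop" unfolding le_def using top_in
  by (meson LC_thm.ax_K mp_in thm_in)

lemma le_topD: "le PTop A \<Longrightarrow> A \<in> T" unfolding le_def using top_in mp_in by blast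

lemma in_le: "A \<in> T \<Longrightarrow> le B A" unfolding le_def
  by (meson LC_thm.ax_K mp_in thm_in)

lemma and1: "le B C \<Longrightarrow> le (PAnd B C) B \<and> le B (PAnd B C)"
proof
  show "le (PAnd B C) B" unfolding le_def using thm_in LC_thm.ax_and1 by blast
  assume "le B C"
  then have "pder (insert B T) (PAnd B C)" unfolding le_def
    by (meson LC_thm.ax_andI insertI1 pder.phyp pder.pmp pder.pthm subset_insertI pder_mono)
  then show "le B (PAnd B C)" unfolding le_def using deduction closed by blast
qed

lemma and2: "le C B \<Longrightarrow> le (PAnd B C) C \<and> le C (PAnd B C)"
proof
  show "le (PAnd B C) C" unfolding le_def using thm_in LC_thm.ax_and2 by blast
  assume "le C B"
  then have "pder (insert C T) (PAnd B C)" unfolding le_def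
    by (meson LC_thm.ax_andI insertI1 pder.phyp pder.pmp pder.pthm subset_insertI pder_mono)
  then show "le C (PAnd B C)" unfolding le_def using deduction closed by blast
qed

lemma or1: "le B C \<Longrightarrow> le (POr B C) C \<and> le C (POr B C)"
proof
  show "le C (POr B C)" unfolding le_def using thm_in LC_thm.ax_or2 by blast
  assume "le B C"
  then show "le (POr B C) C" unfolding le_def
    by (meson LC_thm.ax_orE LC_id mp_in thm_in)
qed

lemma or2: "le C B \<Longrightarrow> le (POr B C) B \<and> le B (POr B C)"
proof
  show "le B (POr B C)" unfolding le_def using thm_in LC_thm.ax_or1 by blast
  assume "le C B"
  then show "le (POr B C) B" unfolding le_def
    by (meson LC_thm.ax_orE LC_id mp_in thm_in)
qed

lemma imp1: "le B C \<Longrightarrow> le (PImp B C) PTop \<and> le PTop (PImp B C)"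
  using le_top in_le le_def by blast

lemma imp2: "\<not> le B C \<Longrightarrow> le (PImp B C) C \<and> le C (PImp B C)"
proof
  show "le C (PImp B C)" unfolding le_def using thm_in LC_thm.ax_K by blast
  assume n: "\<not> le B C"
  have "POr (PImp (PImp B C) B) (PImp B (PImp B C)) \<in> T" using thm_in LC_thm.ax_lin by blast
  moreover have "PImp B (PImp B C) \<notin> T"
  proof
    assume "PImp B (PImp B C) \<in> T"
    then have "pder (insert B T) C"
      by (meson insertI1 pder.phyp pder.pmp subset_insertI pder_mono)
    then show False using n unfolding le_def using deduction closed by blast
  qed
  ultimately have h: "PImp (PImp B C) B \<in> T" using prime by blast
  have "pder (insert (PImp B C) T) C"
    by (meson h insertI1 pder.phyp pder.pmp subset_insertI pder_mono)
  then show "le (PImp B C) C" unfolding le_def using deduction closed by blast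
qed

definition S where "S = sub D"
definition r :: "pform \<Rightarrow> nat" where "r A = card {B \<in> S. \<not> le A B}"

lemma finS: "finite S" unfolding S_def by (rule finite_sub)

lemma r_mono: "le A A' \<Longrightarrow> r A \<le> r A'"
  unfolding r_def by (rule card_mono) (use finS le_trans in auto)

lemma r_eq: "le A A' \<Longrightarrow> le A' A \<Longrightarrow> r A = r A'"
  using r_mono by (simp add: order_antisym)

lemma r_strict: "C \<in> S \<Longrightarrow> \<not> le A C \<Longrightarrow> r C < r A"
  unfolding r_def
proof (rule psubset_card_mono)
  assume "C \<in> S" "\<not> le A C"
  show "finite {B \<in> S. \<not> le A B}" using finS by simp
  show "{B \<in> S. \<not> le C B} \<subset> {B \<in> S. \<not> le A B}"
    using \<open>C \<in> S\<close> \<open>\<not> le A C\<close> le_refl le_total le_trans by blast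
qed

lemma r_bot: "r PBot = 0" unfolding r_def using le_bot finS by simp

definition K where "K = r PTop"
definition w where "w i = r (PVar i)"

lemma w_le: "w i \<le> K" unfolding w_def K_def using r_mono le_top by blast

lemma truth: "sub A \<subseteq> S \<Longrightarrow> peval K w A = r A"
proof (induction A)
  case (PVar x) then show ?case by (simp add: w_def)
next
  case PBot then show ?case by (simp add: r_bot)
next
  case (PAnd B C)
  then have ih: "peval K w B = r B" "peval K w C = r C" by auto
  show ?case
  proof (cases "le B C")
    case True
    then show ?thesis using ih r_mono[OF True] r_eq and1[OF True] by auto
  next
    case False
    then have "le C B" using le_total by blast
    then show ?thesis using ih r_mono[OF \<open>le C B\<close>] r_eq and2[OF \<open>le C B\<close>] by auto
  qed
next
  case (POr B C)
  then have ih: "peval K w B = r B" "peval K w C = r C" by auto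
  show ?case
  proof (cases "le B C")
    case True
    then show ?thesis using ih r_mono[OF True] r_eq or1[OF True] by auto
  next
    case False
    then have "le C B" using le_total by blast
    then show ?thesis using ih r_mono[OF \<open>le C B\<close>] r_eq or2[OF \<open>le C B\<close>] by auto
  qed
next
  case (PImp B C)
  then have ih: "peval K w B = r B" "peval K w C = r C" and CS: "C \<in> S"
    using sub_self by auto
  show ?case
  proof (cases "le B C")
    case True
    then show ?thesis using ih r_mono[OF True] r_eq imp1[OF True]
      by (auto simp: gimp_def K_def)
  next
    case False
    then show ?thesis using ih r_strict[OF CS False] r_eq imp2[OF False]
      by (auto simp: gimp_def)
  qed
qed

lemma countermodel: "peval K w D \<noteq> K"
proof -
  have "peval K w D = r D" using truth S_def by simp
  moreover have "r D < K" unfolding K_def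
    by (rule r_strict) (use S_def sub_self le_topD D_notin in auto)
  ultimately show ?thesis by simp
qed

end

theorem LC_complete:
  assumes "\<And>K w. (\<forall>i. w i \<le> K) \<Longrightarrow> peval K w D = K"
  shows "LC_thm D"
proof (rule ccontr)
  assume "\<not> LC_thm D"
  then have "\<not> pder {} D" using pder_empty by blast
  then obtain M where "\<not> pder M D" "\<forall>X. \<not> pder X D \<longrightarrow> M \<subseteq> X \<longrightarrow> X = M"
    using maximal_theory by blast
  then interpret primeth M D by unfold_locales auto
  show False using countermodel w_le assms by blast
qed

primrec evt :: "nat \<Rightarrow> (('f,'p) fm \<Rightarrow> nat) \<Rightarrow> (nat \<Rightarrow> ('f,'p) trm) \<Rightarrow> ('f,'p) trm \<Rightarrow> ('f,'p) trm"
and evf :: "nat \<Rightarrow> (('f,'p) fm \<Rightarrow> nat) \<Rightarrow> (nat \<Rightarrow> ('f,'p) trm) \<Rightarrow> ('f,'p) fm \<Rightarrow> nat" where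
  "evt K V e (Free x) = Free x"
| "evt K V e (Bnd n) = e n"
| "evt K V e (Fn f ts) = Fn f (map (evt K V e) ts)"
| "evt K V e (Eps A) = (SOME d. \<forall>d'. evf K V (case_nat d' e) A \<le> evf K V (case_nat d e) A)"
| "evt K V e (Tau A) = (SOME d. \<forall>d'. evf K V (case_nat d e) A \<le> evf K V (case_nat d' e) A)"
| "evf K V e (Atom P ts) = min K (V (Atom P (map (evt K V e) ts)))"
| "evf K V e Bot = 0"
| "evf K V e (And A B) = min (evf K V e A) (evf K V e B)"
| "evf K V e (Or A B) = max (evf K V e A) (evf K V e B)"
| "evf K V e (Imp A B) = gimp K (evf K V e A) (evf K V e B)"

lemma evf_le: "evf K V e A \<le> K"
  by (induction A arbitrary: e) (auto simp: gimp_def min_le_iff_disj)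

lemma ex_max:
  fixes f :: "'a \<Rightarrow> nat"
  assumes "\<And>x. f x \<le> K"
  shows "\<exists>d. \<forall>d'. f d' \<le> f d"
proof -
  have fin: "finite (range f)" using assms by (meson finite_atMost finite_subset image_subsetI atMost_iff)
  have "Max (range f) \<in> range f" using fin by (intro Max_in) auto
  then obtain d where "f d = Max (range f)" by auto
  then show ?thesis using fin by (metis Max_ge rangeI)
qed

lemma ex_min:
  fixes f :: "'a \<Rightarrow> nat"
  shows "\<exists>d. \<forall>d'. f d \<le> f d'"
proof -
  obtain d where "f d = (LEAST n. n \<in> range f)" by (metis LeastI rangeE rangeI)
  then show ?thesis by (metis Least_le rangeI)
qed

lemma closed_indep:
  "lct k t \<Longrightarrow> (\<forall>i<k. e i = e' i) \<Longrightarrow> evt K V e t = evt K V e' t"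
  "lcf k A \<Longrightarrow> (\<forall>i<k. e i = e' i) \<Longrightarrow> evf K V e A = evf K V e' A"
proof (induction t and A arbitrary: k e e' and k e e')
  case (Fn f ts)
  then show ?case by (auto simp: list_all_iff)
next
  case (Eps A)
  have "\<forall>d. \<forall>i<Suc k. case_nat d e i = case_nat d e' i" using Eps.prems(2)
    by (auto split: nat.splits)
  then have "\<And>d. evf K V (case_nat d e) A = evf K V (case_nat d e') A"
    using Eps by auto
  then show ?case by simp
next
  case (Tau A)
  have "\<forall>d. \<forall>i<Suc k. case_nat d e i = case_nat d e' i" using Tau.prems(2)
    by (auto split: nat.splits)
  then have "\<And>d. evf K V (case_nat d e) A = evf K V (case_nat d e') A"
    using Tau by auto
  then show ?case by simp
next
  case (Atom P ts)
  then have "map (evt K V e) ts = map (evt K V e') ts" by (auto simp: list_all_iff)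
  then show ?case by (simp only: evf.simps)
next
  case (And A B) show ?case using And.IH(1)[of k e e'] And.IH(2)[of k e e'] And.prems by simp
next
  case (Or A B) show ?case using Or.IH(1)[of k e e'] Or.IH(2)[of k e e'] Or.prems by simp
next
  case (Imp A B) show ?case using Imp.IH(1)[of k e e'] Imp.IH(2)[of k e e'] Imp.prems by simp
qed auto

lemma open_lemma:
  assumes t: "lct 0 t"
  shows "evt K V e (opent k t s) = evt K V (e(k := evt K V e0 t)) s"
    "evf K V e (openf k t A) = evf K V (e(k := evt K V e0 t)) A"
proof (induction s and A arbitrary: k e and k e)
  case (Bnd n)
  then show ?case using closed_indep(1)[OF t] by auto
next
  case (Eps A)
  have "\<And>d. (case_nat d e)(Suc k := evt K V e0 t) = case_nat d (e(k := evt K V e0 t))"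
    by (auto split: nat.splits)
  then show ?case using Eps by (simp del: fun_upd_apply)
next
  case (Tau A)
  have "\<And>d. (case_nat d e)(Suc k := evt K V e0 t) = case_nat d (e(k := evt K V e0 t))"
    by (auto split: nat.splits)
  then show ?case using Tau by (simp del: fun_upd_apply)
next
  case (Atom P ts)
  then have "map (evt K V e \<circ> opent k t) ts = map (evt K V (e(k := evt K V e0 t))) ts" by (auto simp del: fun_upd_apply)
  then show ?case by (simp only: evf.simps openf.simps map_map)
qed auto

lemma open0:
  assumes "lct 0 t" "lcf 1 A"
  shows "evf K V e (openf 0 t A) = evf K V (case_nat (evt K V e t) e) A"
proof -
  have "evf K V e (openf 0 t A) = evf K V (e(0 := evt K V e t)) A"
    using open_lemma(2)[OF assms(1)] .
  also have "\<dots> = evf K V (case_nat (evt K V e t) e) A"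
    by (rule closed_indep(2)[OF assms(2)]) auto
  finally show ?thesis .
qed

lemma lct_Eps: "lcf 1 A \<Longrightarrow> lct 0 (Eps A)" by simp
lemma lct_Tau: "lcf 1 A \<Longrightarrow> lct 0 (Tau A)" by simp

lemma crit_sound: "critical A \<Longrightarrow> evf K V e A = K"
proof (induction rule: critical.induct)
  case (crit_eps A t)
  let ?f = "\<lambda>d. evf K V (case_nat d e) A"
  have ex: "\<exists>d. \<forall>d'. ?f d' \<le> ?f d" by (rule ex_max[of _ K]) (rule evf_le)
  have "\<forall>d'. ?f d' \<le> ?f (evt K V e (Eps A))" using someI_ex[OF ex] by simp
  then show ?case using open0[OF crit_eps(2,1)] open0[OF lct_Eps[OF crit_eps(1)] crit_eps(1)]
    by (simp add: gimp_def)
next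
  case (crit_tau A t)
  let ?f = "\<lambda>d. evf K V (case_nat d e) A"
  have ex: "\<exists>d. \<forall>d'. ?f d \<le> ?f d'" by (rule ex_min)
  have "\<forall>d'. ?f (evt K V e (Tau A)) \<le> ?f d'" using someI_ex[OF ex] by simp
  then show ?case using open0[OF crit_tau(2,1)] open0[OF lct_Tau[OF crit_tau(1)] crit_tau(1)]
    by (simp add: gimp_def)
qed

lemma evf_psubst: "evf K V e (psubst \<sigma> \<phi>) = peval K (\<lambda>i. evf K V e (\<sigma> i)) \<phi>"
  by (induction \<phi>) auto

lemma et_sound: "deriv_et_LC A \<Longrightarrow> evf K V e A = K"
proof (induction rule: deriv_et_LC.induct)
  case (et_inst \<phi> \<sigma>)
  have "\<forall>i. evf K V e (\<sigma> i) \<le> K" using evf_le by blast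
  then show ?case using LC_sound[OF et_inst(1)] by (simp add: evf_psubst)
next
  case (et_crit A) then show ?case by (rule crit_sound)
next
  case (et_mp A B)
  then show ?case using evf_le[of K V e B] by (auto simp: gimp_def split: if_splits)
qed

primrec sk :: "(('f,'p) fm \<Rightarrow> nat) \<Rightarrow> ('f,'p) fm \<Rightarrow> pform" where
  "sk g (Atom P ts) = PVar (g (Atom P ts))"
| "sk g Bot = PBot"
| "sk g (And A B) = PAnd (sk g A) (sk g B)"
| "sk g (Or A B) = POr (sk g A) (sk g B)"
| "sk g (Imp A B) = PImp (sk g A) (sk g B)"

primrec atoms :: "('f,'p) fm \<Rightarrow> ('f,'p) fm set" where
  "atoms (Atom P ts) = {Atom P ts}"
| "atoms Bot = {}"
| "atoms (And A B) = atoms A \<union> atoms B"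
| "atoms (Or A B) = atoms A \<union> atoms B"
| "atoms (Imp A B) = atoms A \<union> atoms B"

lemma finite_atoms: "finite (atoms A)" by (induction A) auto

lemma atoms_lcf: "lcf k A \<Longrightarrow> a \<in> atoms A \<Longrightarrow> lcf k a"
  by (induction A) auto

lemma psubst_sk: "(\<forall>a\<in>atoms A. \<sigma> (g a) = a) \<Longrightarrow> psubst \<sigma> (sk g A) = A"
  by (induction A) auto

lemma evt_free:
  "lct k t \<Longrightarrow> k = 0 \<Longrightarrow> et_free_t t \<Longrightarrow> evt K V e t = t"
  "lcf k A \<Longrightarrow> k = 0 \<Longrightarrow> et_free A \<Longrightarrow> evf K V e A = peval K (\<lambda>i. min K (w i)) (sk g A)"
  if "V = (\<lambda>a. w (g a))"
proof (induction t and A arbitrary: k and k)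
  case (Fn f ts)
  then have "map (evt K V e) ts = ts" by (auto simp: list_all_iff intro: map_idI)
  then show ?case by simp
next
  case (Atom P ts)
  then have "map (evt K V e) ts = ts" by (auto simp: list_all_iff intro: map_idI)
  then show ?case using that by simp
qed auto

theorem mainTheorem5:
  fixes D :: "('f, 'p) fm"
  assumes "lcf 0 D"
    and "et_free D"
    and "deriv_et_LC D"
  shows "deriv_LC D"
proof -
  obtain g :: "('f,'p) fm \<Rightarrow> nat" and n where g: "inj_on g (atoms D)"
    using finite_imp_inj_to_nat_seg[OF finite_atoms[of D]] by blast
  define \<sigma> where "\<sigma> i = (if i \<in> g ` atoms D then inv_into (atoms D) g i else Bot)" for i
  have \<sigma>lc: "lcf 0 (\<sigma> i)" for i
    unfolding \<sigma>_def using atoms_lcf[OF assms(1)] inv_into_f_f[OF g] by auto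
  have eq: "psubst \<sigma> (sk g D) = D"
    by (rule psubst_sk) (auto simp: \<sigma>_def inv_into_f_f[OF g])
  have "LC_thm (sk g D)"
  proof (rule LC_complete)
    fix K :: nat and w :: "nat \<Rightarrow> nat" assume w: "\<forall>i. w i \<le> K"
    have "evf K (\<lambda>a. w (g a)) (\<lambda>_. Free 0) D = K" using et_sound[OF assms(3)] .
    moreover have "evf K (\<lambda>a. w (g a)) (\<lambda>_. Free 0) D = peval K (\<lambda>i. min K (w i)) (sk g D)"
      using evt_free(2)[OF refl assms(1) refl assms(2)] .
    moreover have "(\<lambda>i. min K (w i)) = w" using w by (simp add: fun_eq_iff min_def) (meson le_antisym)
    ultimately show "peval K w (sk g D) = K" by simp
  qed
  then have "deriv_LC (psubst \<sigma> (sk g D))" using \<sigma>lc by (rule deriv_LC.L_inst)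
  then show ?thesis using eq by simp
qed

end
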